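(* Assume $\lambda_1,\lambda_2>0$ and $\lambda_1\lambda_2<1$, with $\delta_0,\delta_1,\delta_2>0$ fixed, and let $(\theta_1^*,\theta_2^* )$ be the unique fixed point in $(0,\infty)^2$ of $(\theta_1,\theta_2)\mapsto(\varphi_1(\theta_2),\varphi_2(\theta_1))$ and \[ p_1^*=\frac{\delta_0\theta_2^*}{\delta_0\theta_1^*+\delta_0\theta_2^*+2\theta_1^*\theta_2^*},\qquad p_2^*=\frac{\delta_0\theta_1^*}{\delta_0\theta_1^*+\delta_0\theta_2^*+2\theta_1^*\theta_2^*}. \] Then \[ \lim_{\lambda_1\lambda_2\nearrow1}\theta_1^*=\lim_{\lambda_1\lambda_2\nearrow1}\theta_2^*=0\quad\text{and}\quad\lim_{\lambda_1\lambda_2\nearrow1}(p_1^*+p_2^* )=1. \]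
   Context: $\delta_0>0$ is the insurer's absolute risk aversion, $\delta_1,\delta_2>0$ the reinsurers', and $\lambda_1,\lambda_2>0$ the competition degrees. For $i\ne j$ in $\{1,2\}$ and $x>0$, \[ \varphi_i(x)=\frac{(\delta_0+2\delta_i)x^2+(1+\lambda_j)\delta_0\delta_i\,x}{2x^2+\big((1+2\lambda_j)\delta_0+2\lambda_j\delta_i\big)x+\lambda_j(1+\lambda_j)\delta_0\delta_i}. \] In the paper's two-layer reinsurance game, $(\theta_1^*,\theta_2^* )$ are the equilibrium variance-premium loadings of the two reinsurers and $(p_1^*,p_2^* )$ the insurer's equilibrium proportions ceded to them. *)

theory Defs
  imports "HOL-Analysis.Analysis"
begin

text \<open>phi d0 di lj x is the paper's varphi_i(x), where d0 = delta_0, di = delta_i and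
  lj = lambda_j (j the other index).\<close>
definition phi :: "real \<Rightarrow> real \<Rightarrow> real \<Rightarrow> real \<Rightarrow> real" where
  "phi d0 di lj x =
     ((d0 + 2*di) * x^2 + (1 + lj) * d0 * di * x) /
     (2 * x^2 + ((1 + 2*lj) * d0 + 2*lj*di) * x + lj * (1 + lj) * d0 * di)"

definition theta_star :: "real \<Rightarrow> real \<Rightarrow> real \<Rightarrow> real \<Rightarrow> real \<Rightarrow> real \<times> real" where
  "theta_star d0 d1 d2 l1 l2 =
     (THE t. 0 < fst t \<and> 0 < snd t \<and>
             fst t = phi d0 d1 l2 (snd t) \<and> snd t = phi d0 d2 l1 (fst t))"

definition p1_star :: "real \<Rightarrow> real \<Rightarrow> real \<Rightarrow> real \<Rightarrow> real \<Rightarrow> real" where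
  "p1_star d0 d1 d2 l1 l2 =
     (let (t1, t2) = theta_star d0 d1 d2 l1 l2 in d0 * t2 / (d0 * t1 + d0 * t2 + 2 * t1 * t2))"

definition p2_star :: "real \<Rightarrow> real \<Rightarrow> real \<Rightarrow> real \<Rightarrow> real \<Rightarrow> real" where
  "p2_star d0 d1 d2 l1 l2 =
     (let (t1, t2) = theta_star d0 d1 d2 l1 l2 in d0 * t1 / (d0 * t1 + d0 * t2 + 2 * t1 * t2))"

text \<open>The limit lambda_1 lambda_2 increasing to 1, over pairs (lambda_1,lambda_2) with
  lambda_1, lambda_2 > 0 and lambda_1 lambda_2 < 1.\<close>
definition lam_filter :: "(real \<times> real) filter" where
  "lam_filter = inf (principal {l. 0 < fst l \<and> 0 < snd l})
                    (filtercomap (\<lambda>l. fst l * snd l) (at_left 1))"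

end

theory Submission
  imports Defs
begin

definition gg :: "real \<Rightarrow> real \<Rightarrow> real \<Rightarrow> real \<Rightarrow> real" where
  "gg d0 di lj x = (2*x+(1+lj)*d0)/((d0+2*di)*x+(1+lj)*d0*di)"

lemma gg_den_pos:
  assumes "0<d0" "0<di" "0<lj" "0\<le>(x::real)"
  shows "0 < (d0+2*di)*x+(1+lj)*d0*di"
  using assms by (intro add_nonneg_pos mult_nonneg_nonneg mult_pos_pos) auto

lemma gg_pos:
  assumes "0<d0" "0<di" "0<lj" "0\<le>(x::real)"
  shows "0 < gg d0 di lj x"
proof -
  have "0 < 2*x+(1+lj)*d0" using assms by (intro add_nonneg_pos) auto
  thus ?thesis unfolding gg_def using assms gg_den_pos[OF assms]
    by (intro divide_pos_pos) auto
qed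

lemma gg_lower:
  assumes "0<d0" "0<di" "0<lj" "0\<le>(x::real)"
  shows "2/(d0+2*di) \<le> gg d0 di lj x"
proof -
  have D: "0 < (d0+2*di)*x+(1+lj)*d0*di" by (rule gg_den_pos[OF assms])
  have "2*((d0+2*di)*x+(1+lj)*d0*di) \<le> (2*x+(1+lj)*d0)*(d0+2*di)"
  proof -
    have "0 \<le> (1+lj)*d0*d0" using assms by auto
    thus ?thesis by (simp add: algebra_simps)
  qed
  thus ?thesis unfolding gg_def using D assms by (simp add: divide_simps)
qed

lemma gg_anti:
  assumes "0<d0" "0<di" "0<lj" "0\<le>(x::real)" "x \<le> y"
  shows "gg d0 di lj y \<le> gg d0 di lj x"
proof -
  have Dx: "0 < (d0+2*di)*x+(1+lj)*d0*di" by (rule gg_den_pos) (use assms in auto)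
  have Dy: "0 < (d0+2*di)*y+(1+lj)*d0*di" by (rule gg_den_pos) (use assms in auto)
  have e: "(2*x+(1+lj)*d0)*((d0+2*di)*y+(1+lj)*d0*di) - (2*y+(1+lj)*d0)*((d0+2*di)*x+(1+lj)*d0*di)
      = (y-x)*((1+lj)*d0*d0)" by (simp add: algebra_simps)
  have "0 \<le> (y-x)*((1+lj)*d0*d0)" using assms by auto
  hence "(2*y+(1+lj)*d0)*((d0+2*di)*x+(1+lj)*d0*di) \<le> (2*x+(1+lj)*d0)*((d0+2*di)*y+(1+lj)*d0*di)"
    using e by linarith
  thus ?thesis unfolding gg_def using Dx Dy by (simp add: divide_simps)
qed

lemma xgg_strict:
  assumes "0<d0" "0<di" "0<lj" "0\<le>(x::real)" "x < y"
  shows "x * gg d0 di lj x < y * gg d0 di lj y"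
proof -
  define b where "b = d0+2*di"
  define c where "c = (1+lj)*d0*di"
  define a where "a = (1+lj)*d0"
  have b: "0<b" and c: "0<c" and a: "0<a" using assms by (auto simp: a_def b_def c_def)
  have Dx: "0 < b*x+c" using b c assms by (simp add: add_nonneg_pos)
  have Dy: "0 < b*y+c" using b c assms by (simp add: add_nonneg_pos)
  have e: "y*(2*y+a)*(b*x+c) - x*(2*x+a)*(b*y+c) = (y-x)*(2*b*x*y + 2*c*(x+y) + a*c)"
    by (simp add: algebra_simps)
  have "0 < (y-x)*(2*b*x*y + 2*c*(x+y) + a*c)" using assms a b c
    by (intro mult_pos_pos add_nonneg_pos) auto
  hence "x*(2*x+a)*(b*y+c) < y*(2*y+a)*(b*x+c)" using e by linarith
  hence "x*(2*x+a)/(b*x+c) < y*(2*y+a)/(b*y+c)" using Dx Dy by (simp add: divide_simps)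
  thus ?thesis unfolding gg_def a_def b_def c_def by simp
qed

lemma phi_alt:
  assumes "0<d0" "0<di" "0<lj" "0\<le>(x::real)"
  shows "phi d0 di lj x = x / (lj + x * gg d0 di lj x)"
proof -
  define b where "b = d0+2*di"
  define c where "c = (1+lj)*d0*di"
  define a where "a = (1+lj)*d0"
  have b: "0<b" and c: "0<c" and a: "0<a" using assms by (auto simp: a_def b_def c_def)
  have Dx: "0 < b*x+c" using b c assms by (simp add: add_nonneg_pos)
  have e1: "phi d0 di lj x = x*(b*x+c) / (lj*(b*x+c) + x*(2*x+a))"
    unfolding phi_def a_def b_def c_def by (simp add: algebra_simps power2_eq_square)
  have g: "gg d0 di lj x = (2*x+a)/(b*x+c)" by (simp add: gg_def a_def b_def c_def)
  have L: "0 < lj*(b*x+c) + x*(2*x+a)" using assms a Dx by (intro add_pos_nonneg) auto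
  have "lj + x*((2*x+a)/(b*x+c)) = (lj*(b*x+c) + x*(2*x+a))/(b*x+c)"
    using Dx by (simp add: field_simps)
  hence "x / (lj + x * gg d0 di lj x) = x*(b*x+c) / (lj*(b*x+c) + x*(2*x+a))"
    unfolding g using Dx L by simp
  thus ?thesis using e1 by simp
qed

lemma phi_pos:
  assumes "0<d0" "0<di" "0<lj" "0<(x::real)"
  shows "0 < phi d0 di lj x"
  using assms phi_alt[of d0 di lj x] gg_pos[of d0 di lj x]
  by (auto intro!: divide_pos_pos add_pos_nonneg)

lemma phi_nonneg:
  assumes "0<d0" "0<di" "0<lj" "0\<le>(x::real)"
  shows "0 \<le> phi d0 di lj x"
  using assms phi_alt[of d0 di lj x] gg_pos[of d0 di lj x]
  by (auto intro!: divide_nonneg_pos add_pos_nonneg)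


lemma fp_AB:
  assumes d: "0<d0" "0<d1" "0<d2" and l: "0<l1" "0<l2"
    and t: "0<t1" "0<t2" "t1 = phi d0 d1 l2 t2" "t2 = phi d0 d2 l1 t1"
  shows "t1 * (l2 + t2 * gg d0 d1 l2 t2) = t2"
    "t2 * (l1 + t1 * gg d0 d2 l1 t1) = t1"
    "(l2 + t2 * gg d0 d1 l2 t2) * (l1 + t1 * gg d0 d2 l1 t1) = 1"
proof -
  define A where "A = l2 + t2 * gg d0 d1 l2 t2"
  define B where "B = l1 + t1 * gg d0 d2 l1 t1"
  have A: "0 < A" unfolding A_def using gg_pos[of d0 d1 l2 t2] d l t(1,2)
    by (intro add_pos_nonneg) auto
  have B: "0 < B" unfolding B_def using gg_pos[of d0 d2 l1 t1] d l t(1,2)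
    by (intro add_pos_nonneg) auto
  have 1: "t1 = t2 / A" using t(3) phi_alt[of d0 d1 l2 t2] d l t(1,2) unfolding A_def by simp
  have 2: "t2 = t1 / B" using t(4) phi_alt[of d0 d2 l1 t1] d l t(1,2) unfolding B_def by simp
  have e1: "t1 * A = t2" using 1 A by simp
  have e2: "t2 * B = t1" using 2 B by simp
  show "t1 * (l2 + t2 * gg d0 d1 l2 t2) = t2" using e1 unfolding A_def .
  show "t2 * (l1 + t1 * gg d0 d2 l1 t1) = t1" using e2 unfolding B_def .
  have "t1 * t2 * (A * B) = (t1 * A) * (t2 * B)" by (simp add: algebra_simps)
  also have "\<dots> = t1 * t2" unfolding e1 e2 by simp
  finally have "t1 * t2 * (A * B) = t1 * t2" .
  hence "A * B = 1" using t(1,2) by simp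
  thus "(l2 + t2 * gg d0 d1 l2 t2) * (l1 + t1 * gg d0 d2 l1 t1) = 1"
    unfolding A_def B_def .
qed

lemma fp_unique_aux:
  assumes d: "0<d0" "0<d1" "0<d2" and l: "0<l1" "0<l2"
    and t: "0<t1" "0<t2" "t1 = phi d0 d1 l2 t2" "t2 = phi d0 d2 l1 t1"
    and s: "0<s1" "0<s2" "s1 = phi d0 d1 l2 s2" "s2 = phi d0 d2 l1 s1"
    and lt: "t2 < s2"
  shows False
proof -
  have t1e: "t1 = 1 / (l2/t2 + gg d0 d1 l2 t2)"
    using t(3) phi_alt[of d0 d1 l2 t2] d l t(1,2) by (simp add: field_simps)
  have s1e: "s1 = 1 / (l2/s2 + gg d0 d1 l2 s2)"
    using s(3) phi_alt[of d0 d1 l2 s2] d l s(1,2) by (simp add: field_simps)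
  have "l2/s2 < l2/t2" using l t(1,2) s(1,2) lt by (simp add: divide_strict_left_mono)
  moreover have "gg d0 d1 l2 s2 \<le> gg d0 d1 l2 t2" using gg_anti[of d0 d1 l2 t2 s2] d l t(1,2) lt by auto
  ultimately have lt2: "l2/s2 + gg d0 d1 l2 s2 < l2/t2 + gg d0 d1 l2 t2" by linarith
  have p: "0 < l2/s2 + gg d0 d1 l2 s2" using gg_pos[of d0 d1 l2 s2] d l s(1,2)
    by (intro add_pos_pos) auto
  have lt1: "t1 < s1" unfolding t1e s1e using lt2 p by (simp add: divide_strict_left_mono)
  have a: "l2 + t2 * gg d0 d1 l2 t2 < l2 + s2 * gg d0 d1 l2 s2"
    using xgg_strict[of d0 d1 l2 t2 s2] d l t(1,2) lt by auto
  have b: "l1 + t1 * gg d0 d2 l1 t1 < l1 + s1 * gg d0 d2 l1 s1"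
    using xgg_strict[of d0 d2 l1 t1 s1] d l t(1,2) lt1 by auto
  have pa: "0 < l2 + t2 * gg d0 d1 l2 t2" using gg_pos[of d0 d1 l2 t2] d l t(1,2)
    by (intro add_pos_nonneg) auto
  have pb: "0 < l1 + t1 * gg d0 d2 l1 t1" using gg_pos[of d0 d2 l1 t1] d l t(1,2)
    by (intro add_pos_nonneg) auto
  have "(l2 + t2 * gg d0 d1 l2 t2) * (l1 + t1 * gg d0 d2 l1 t1)
      < (l2 + s2 * gg d0 d1 l2 s2) * (l1 + s1 * gg d0 d2 l1 s1)"
    using a b pa pb by (intro mult_strict_mono) auto
  thus False using fp_AB(3)[OF d l t] fp_AB(3)[OF d l s] by simp
qed

lemma fp_unique:
  assumes d: "0<d0" "0<d1" "0<d2" and l: "0<l1" "0<l2"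
    and t: "0<t1" "0<t2" "t1 = phi d0 d1 l2 t2" "t2 = phi d0 d2 l1 t1"
    and s: "0<s1" "0<s2" "s1 = phi d0 d1 l2 s2" "s2 = phi d0 d2 l1 s1"
  shows "t1 = s1 \<and> t2 = s2"
proof -
  have "\<not> t2 < s2" using fp_unique_aux[OF d l t s] by blast
  moreover have "\<not> s2 < t2" using fp_unique_aux[OF d l s t] by blast
  ultimately have "t2 = s2" by linarith
  thus ?thesis using t(3) s(3) by simp
qed

lemma phi_cont:
  assumes "0<d0" "0<di" "0<lj" "S \<subseteq> {0..}"
  shows "continuous_on S (phi d0 di lj)"
proof -
  have "continuous_on S (\<lambda>x. ((d0 + 2*di) * x^2 + (1 + lj) * d0 * di * x) /
     (2 * x^2 + ((1 + 2*lj) * d0 + 2*lj*di) * x + lj * (1 + lj) * d0 * di))"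
  proof (intro continuous_intros ballI)
    fix x assume "x \<in> S"
    hence x: "0 \<le> x" using assms by auto
    have "0 < 2 * x^2 + ((1 + 2*lj) * d0 + 2*lj*di) * x + lj * (1 + lj) * d0 * di"
      using assms x by (intro add_nonneg_pos add_nonneg_nonneg mult_nonneg_nonneg mult_pos_pos) auto
    thus "2 * x^2 + ((1 + 2*lj) * d0 + 2*lj*di) * x + lj * (1 + lj) * d0 * di \<noteq> 0" by simp
  qed
  thus ?thesis by (simp add: phi_def[abs_def])
qed

lemma gg_cont:
  assumes "0<d0" "0<di" "0<lj" "continuous_on S f" "\<And>x. x \<in> S \<Longrightarrow> 0 \<le> f x"
  shows "continuous_on S (\<lambda>x. gg d0 di lj (f x))"
  unfolding gg_def
proof (intro continuous_intros assms ballI)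
  fix x assume "x \<in> S"
  thus "(d0 + 2 * di) * f x + (1 + lj) * d0 * di \<noteq> 0"
    using gg_den_pos[of d0 di lj "f x"] assms by auto
qed

lemma fp_exists:
  assumes d: "0<d0" "0<d1" "0<d2" and l: "0<l1" "0<l2" "l1*l2 < 1"
  shows "\<exists>t1 t2. 0<t1 \<and> 0<t2 \<and> t1 = phi d0 d1 l2 t2 \<and> t2 = phi d0 d2 l1 t1"
proof -
  define P where "P = phi d0 d1 l2"
  define G where "G = (\<lambda>t. (l2 + t * gg d0 d1 l2 t) * (l1 + P t * gg d0 d2 l1 (P t)))"
  define c1 where "c1 = 2/(d0+2*d1)"
  have c1: "0 < c1" using d by (simp add: c1_def)
  define T where "T = 2/(l1*c1)"
  have T: "0 < T" using c1 l by (simp add: T_def)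
  have Pnn: "\<And>t. 0 \<le> t \<Longrightarrow> 0 \<le> P t" unfolding P_def using phi_nonneg d l by auto
  have cP: "continuous_on {0..T} P" unfolding P_def using phi_cont[of d0 d1 l2 "{0..T}"] d l by auto
  have cg2: "continuous_on {0..T} (\<lambda>t. gg d0 d2 l1 (P t))"
    by (rule gg_cont[OF _ _ _ cP]) (use d l Pnn in auto)
  have cg1: "continuous_on {0..T} (\<lambda>t. gg d0 d1 l2 t)"
    by (rule gg_cont[where f="\<lambda>t. t"]) (use d l in auto)
  have cont: "continuous_on {0..T} G"
    unfolding G_def by (intro continuous_on_mult continuous_on_add continuous_on_const continuous_on_id cP cg1 cg2)
  have P0: "P 0 = 0" by (simp add: P_def phi_def)
  have G0: "G 0 \<le> 1" using l by (simp add: G_def P0 mult.commute)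
  have "T * c1 \<le> T * gg d0 d1 l2 T"
    by (intro mult_left_mono) (use gg_lower[of d0 d1 l2 T] d l T in \<open>auto simp: c1_def\<close>)
  hence A: "T * c1 \<le> l2 + T * gg d0 d1 l2 T" using l by linarith
  have B: "l1 \<le> l1 + P T * gg d0 d2 l1 (P T)" using Pnn[of T] gg_pos[of d0 d2 l1 "P T"] d l T by auto
  have TC: "0 < T*c1" using T c1 by simp
  have "(T*c1) * l1 \<le> G T" unfolding G_def
    by (intro mult_mono; use A B l TC in linarith)
  moreover have "(T*c1)*l1 = 2" using c1 l by (simp add: T_def)
  ultimately have GT: "1 \<le> G T" by linarith
  obtain x where x: "0 \<le> x" "x \<le> T" "G x = 1" using IVT'[of G 0 1 T, OF G0 GT _ cont] T by auto
  have "x \<noteq> 0" using x(3) l by (auto simp: G_def P0 mult.commute)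
  hence xp: "0 < x" using x by simp
  define t1 where "t1 = P x"
  have t1: "0 < t1" unfolding t1_def P_def using phi_pos d l xp by auto
  define A where "A = l2 + x * gg d0 d1 l2 x"
  define B where "B = l1 + t1 * gg d0 d2 l1 t1"
  have Ap: "0 < A" unfolding A_def using gg_pos[of d0 d1 l2 x] d l xp
    by (intro add_pos_nonneg) auto
  have AB: "A * B = 1" using x(3) unfolding G_def A_def B_def t1_def by simp
  have t1A: "t1 = x / A" unfolding t1_def P_def A_def using phi_alt[of d0 d1 l2 x] d l xp by simp
  have "phi d0 d2 l1 t1 = t1 / B" unfolding B_def using phi_alt[of d0 d2 l1 t1] d l t1 by simp
  also have "\<dots> = x"
  proof -
    have Be: "B = 1/A" using AB Ap by (simp add: eq_divide_eq mult.commute)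
    show ?thesis using t1A Ap by (simp add: Be)
  qed
  finally have e: "phi d0 d2 l1 t1 = x" .
  have e2: "t1 = phi d0 d1 l2 x" by (simp add: t1_def P_def)
  show ?thesis by (rule exI[of _ t1], rule exI[of _ x]) (intro conjI t1 xp e2 e[symmetric])
qed


lemma theta_star_props:
  assumes d: "0<d0" "0<d1" "0<d2" and l: "0<l1" "0<l2" "l1*l2 < 1"
  shows "0 < fst (theta_star d0 d1 d2 l1 l2) \<and> 0 < snd (theta_star d0 d1 d2 l1 l2) \<and>
    fst (theta_star d0 d1 d2 l1 l2) = phi d0 d1 l2 (snd (theta_star d0 d1 d2 l1 l2)) \<and>
    snd (theta_star d0 d1 d2 l1 l2) = phi d0 d2 l1 (fst (theta_star d0 d1 d2 l1 l2))"
proof -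
  let ?P = "\<lambda>t. 0 < fst t \<and> 0 < snd t \<and> fst t = phi d0 d1 l2 (snd t) \<and> snd t = phi d0 d2 l1 (fst t)"
  obtain t1 t2 where tt: "0<t1" "0<t2" "t1 = phi d0 d1 l2 t2" "t2 = phi d0 d2 l1 t1"
    using fp_exists[OF d l] by blast
  have ex: "\<exists>!t. ?P t"
  proof (rule ex1I[of _ "(t1,t2)"])
    show "?P (t1,t2)" unfolding fst_conv snd_conv by (intro conjI tt)
  next
    fix s assume "?P s"
    hence "0 < fst s" "0 < snd s" "fst s = phi d0 d1 l2 (snd s)" "snd s = phi d0 d2 l1 (fst s)" by blast+
    from fp_unique[OF d l(1,2) this tt] show "s = (t1,t2)" by (simp add: prod_eq_iff)
  qed
  show ?thesis unfolding theta_star_def using theI'[OF ex] by blast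
qed

lemma fp_bounds:
  assumes d: "0<d0" "0<d1" "0<d2" and l: "0<l1" "0<l2"
    and t: "0<t1" "0<t2" "t1 = phi d0 d1 l2 t2" "t2 = phi d0 d2 l1 t1"
  shows "l1*l2*(2/(d0+2*d1))*t1 \<le> 1 - l1*l2" "l1*l2*(2/(d0+2*d2))*t2 \<le> 1 - l1*l2"
proof -
  define h1 where "h1 = t2 * gg d0 d1 l2 t2"
  define h2 where "h2 = t1 * gg d0 d2 l1 t1"
  have e1: "t1 * (l2 + h1) = t2" using fp_AB(1)[OF d l t] by (simp add: h1_def)
  have e2: "t2 * (l1 + h2) = t1" using fp_AB(2)[OF d l t] by (simp add: h2_def)
  have e3: "(l2 + h1) * (l1 + h2) = 1" using fp_AB(3)[OF d l t] by (simp add: h1_def h2_def)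
  have g1: "2/(d0+2*d1) \<le> gg d0 d1 l2 t2" using gg_lower[of d0 d1 l2 t2] d l t(1,2) by auto
  have g2: "2/(d0+2*d2) \<le> gg d0 d2 l1 t1" using gg_lower[of d0 d2 l1 t1] d l t(1,2) by auto
  have h1l: "t2 * (2/(d0+2*d1)) \<le> h1" unfolding h1_def using g1 t(1,2) by (intro mult_left_mono) auto
  have h2l: "t1 * (2/(d0+2*d2)) \<le> h2" unfolding h2_def using g2 t(1,2) by (intro mult_left_mono) auto
  have c1: "0 < 2/(d0+2*d1)" and c2: "0 < 2/(d0+2*d2)" using d by auto
  have h1p: "0 \<le> h1"
  proof -
    have "0 \<le> t2 * (2/(d0+2*d1))" using c1 t(2) by simp
    thus ?thesis using h1l by linarith
  qed
  have h2p: "0 \<le> h2"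
  proof -
    have "0 \<le> t1 * (2/(d0+2*d2))" using c2 t(1) by simp
    thus ?thesis using h2l by linarith
  qed
  have eta: "1 - l1*l2 = l2*h2 + l1*h1 + h1*h2" using e3 by (simp add: algebra_simps)
  have hh: "0 \<le> h1*h2" using h1p h2p by simp
  have q1: "0 \<le> l2*h2" using h2p l by simp
  have q2: "0 \<le> l1*h1" using h1p l by simp
  have "t2 = l2*t1 + t1*h1" using e1 by (simp add: algebra_simps)
  moreover have "0 \<le> t1*h1" using t(1) h1p by simp
  ultimately have "l2 * t1 \<le> t2" by linarith
  hence "l1 * (2/(d0+2*d1)) * (l2 * t1) \<le> l1 * (2/(d0+2*d1)) * t2"
    using l c1 by (intro mult_left_mono) auto
  also have "\<dots> = l1 * (t2 * (2/(d0+2*d1)))" by simp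
  also have "\<dots> \<le> l1 * h1" using h1l l by (intro mult_left_mono) auto
  also have "\<dots> \<le> 1 - l1*l2" using eta hh q1 by linarith
  finally show "l1*l2*(2/(d0+2*d1))*t1 \<le> 1 - l1*l2" by (simp add: algebra_simps)
  have "t1 = l1*t2 + t2*h2" using e2 by (simp add: algebra_simps)
  moreover have "0 \<le> t2*h2" using t(2) h2p by simp
  ultimately have "l1 * t2 \<le> t1" by linarith
  hence "l2 * (2/(d0+2*d2)) * (l1 * t2) \<le> l2 * (2/(d0+2*d2)) * t1"
    using l c2 by (intro mult_left_mono) auto
  also have "\<dots> = l2 * (t1 * (2/(d0+2*d2)))" by simp
  also have "\<dots> \<le> l2 * h2" using h2l l by (intro mult_left_mono) auto
  also have "\<dots> \<le> 1 - l1*l2" using eta hh q2 by linarith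
  finally show "l1*l2*(2/(d0+2*d2))*t2 \<le> 1 - l1*l2" by (simp add: algebra_simps)
qed


lemma theta_bounds:
  assumes d: "0<d0" "0<d1" "0<d2" and l: "0<l1" "0<l2" "l1*l2 < 1" "1/2 < l1*l2"
  shows "0 < fst (theta_star d0 d1 d2 l1 l2) \<and>
         fst (theta_star d0 d1 d2 l1 l2) \<le> (d0+2*d1)*(1 - l1*l2) \<and>
         0 < snd (theta_star d0 d1 d2 l1 l2) \<and>
         snd (theta_star d0 d1 d2 l1 l2) \<le> (d0+2*d2)*(1 - l1*l2)"
proof -
  obtain t1 t2 where tt: "theta_star d0 d1 d2 l1 l2 = (t1,t2)" by (cases "theta_star d0 d1 d2 l1 l2")
  have P: "0<t1" "0<t2" "t1 = phi d0 d1 l2 t2" "t2 = phi d0 d2 l1 t1"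
    using theta_star_props[OF d l(1,2,3)] unfolding tt fst_conv snd_conv by blast+
  note B = fp_bounds[OF d l(1,2) P]
  have k1: "0 < d0+2*d1" and k2: "0 < d0+2*d2" using d by auto
  have "(1/2)*(2/(d0+2*d1))*t1 \<le> l1*l2*(2/(d0+2*d1))*t1"
    using l k1 P(1) by (intro mult_right_mono) auto
  hence "t1/(d0+2*d1) \<le> 1 - l1*l2" using B(1) by simp
  hence u1: "t1 \<le> (d0+2*d1)*(1 - l1*l2)" using k1 by (simp add: pos_divide_le_eq mult.commute)
  have "(1/2)*(2/(d0+2*d2))*t2 \<le> l1*l2*(2/(d0+2*d2))*t2"
    using l k2 P(2) by (intro mult_right_mono) auto
  hence "t2/(d0+2*d2) \<le> 1 - l1*l2" using B(2) by simp
  hence u2: "t2 \<le> (d0+2*d2)*(1 - l1*l2)" using k2 by (simp add: pos_divide_le_eq mult.commute)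
  show ?thesis unfolding tt using P(1,2) u1 u2 by simp
qed

lemma psum_bounds:
  assumes d: "0<d0" "0<d1" "0<d2" and l: "0<l1" "0<l2" "l1*l2 < 1"
  shows "1 - 2 * snd (theta_star d0 d1 d2 l1 l2) / d0 \<le> p1_star d0 d1 d2 l1 l2 + p2_star d0 d1 d2 l1 l2 \<and>
         p1_star d0 d1 d2 l1 l2 + p2_star d0 d1 d2 l1 l2 \<le> 1"
proof -
  obtain t1 t2 where tt: "theta_star d0 d1 d2 l1 l2 = (t1,t2)" by (cases "theta_star d0 d1 d2 l1 l2")
  have P: "0<t1" "0<t2"
    using theta_star_props[OF d l] unfolding tt fst_conv snd_conv by blast+
  define Den where "Den = d0 * t1 + d0 * t2 + 2 * t1 * t2"
  have Dp: "0 < Den" unfolding Den_def using P d by (intro add_pos_pos mult_pos_pos) auto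
  have S: "p1_star d0 d1 d2 l1 l2 + p2_star d0 d1 d2 l1 l2 = (d0*t1 + d0*t2)/Den"
    unfolding p1_star_def p2_star_def tt Den_def by (simp add: add_divide_distrib)
  have up: "(d0*t1 + d0*t2)/Den \<le> 1" using Dp P by (simp add: Den_def)
  have id: "(d0 - 2*t2)*Den = d0*(d0*t1 + d0*t2) - (2*d0*t2*t2 + 4*t1*t2*t2)"
    unfolding Den_def by (simp add: algebra_simps)
  have "0 \<le> 2*d0*t2*t2 + 4*t1*t2*t2" using P d by simp
  hence "(d0 - 2*t2)*Den \<le> d0*(d0*t1 + d0*t2)" using id by linarith
  hence "(d0 - 2*t2)/d0 \<le> (d0*t1 + d0*t2)/Den" using Dp d by (simp add: divide_simps mult.commute)
  moreover have "(d0 - 2*t2)/d0 = 1 - 2*t2/d0" using d by (simp add: diff_divide_distrib)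
  ultimately show ?thesis using S up tt by simp
qed


theorem corollary3p5:
  fixes d0 d1 d2 :: real
  assumes "0 < d0" and "0 < d1" and "0 < d2"
  shows "((\<lambda>l. fst (theta_star d0 d1 d2 (fst l) (snd l))) \<longlongrightarrow> 0) lam_filter \<and>
         ((\<lambda>l. snd (theta_star d0 d1 d2 (fst l) (snd l))) \<longlongrightarrow> 0) lam_filter \<and>
         ((\<lambda>l. p1_star d0 d1 d2 (fst l) (snd l) + p2_star d0 d1 d2 (fst l) (snd l))
           \<longlongrightarrow> 1) lam_filter"
proof -
  note d = assms
  have le1: "lam_filter \<le> principal {l. 0 < fst l \<and> 0 < snd l}"
    unfolding lam_filter_def by (rule inf_le1)
  have le2: "lam_filter \<le> filtercomap (\<lambda>l. fst l * snd l) (at_left (1::real))"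
    unfolding lam_filter_def by (rule inf_le2)
  have ev1: "eventually (\<lambda>l. 0 < fst l \<and> 0 < snd l) lam_filter"
    by (rule filter_leD[OF le1]) (simp add: eventually_principal)
  have "eventually (\<lambda>y::real. y \<in> {1/2<..<1}) (at_left 1)"
    by (rule eventually_at_left_real) simp
  hence "eventually (\<lambda>l. fst l * snd l \<in> {1/2<..<(1::real)}) (filtercomap (\<lambda>l. fst l * snd l) (at_left 1))"
    by (rule eventually_filtercomapI)
  hence ev2: "eventually (\<lambda>l. fst l * snd l \<in> {1/2<..<(1::real)}) lam_filter"
    by (rule filter_leD[OF le2])
  have ev: "eventually (\<lambda>l. 0 < fst l \<and> 0 < snd l \<and> fst l * snd l < 1 \<and> 1/2 < fst l * snd l) lam_filter"
    using ev1 ev2 by eventually_elim auto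
  have lim: "((\<lambda>l. fst l * snd l) \<longlongrightarrow> (1::real)) lam_filter"
  proof -
    have "filterlim (\<lambda>l. fst l * snd l) (at_left (1::real)) (filtercomap (\<lambda>l. fst l * snd l) (at_left 1))"
      by (rule filterlim_filtercomap)
    moreover have "at_left (1::real) \<le> nhds 1" unfolding at_within_def by (rule inf_le1)
    ultimately show ?thesis using le2 by (rule filterlim_mono)
  qed
  have limeta: "\<And>k. ((\<lambda>l. k * (1 - fst l * snd l)) \<longlongrightarrow> 0) lam_filter"
  proof -
    fix k :: real
    have "((\<lambda>l. k * (1 - fst l * snd l)) \<longlongrightarrow> k * (1 - 1)) lam_filter"
      by (intro tendsto_intros lim)
    thus "((\<lambda>l. k * (1 - fst l * snd l)) \<longlongrightarrow> 0) lam_filter" by simp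
  qed
  have evb: "eventually (\<lambda>l. 0 < fst (theta_star d0 d1 d2 (fst l) (snd l)) \<and>
         fst (theta_star d0 d1 d2 (fst l) (snd l)) \<le> (d0+2*d1)*(1 - fst l * snd l) \<and>
         0 < snd (theta_star d0 d1 d2 (fst l) (snd l)) \<and>
         snd (theta_star d0 d1 d2 (fst l) (snd l)) \<le> (d0+2*d2)*(1 - fst l * snd l)) lam_filter"
    using ev by eventually_elim (rule theta_bounds[OF d], auto)
  have T1: "((\<lambda>l. fst (theta_star d0 d1 d2 (fst l) (snd l))) \<longlongrightarrow> 0) lam_filter"
  proof (rule tendsto_sandwich[OF _ _ tendsto_const limeta[of "d0+2*d1"]])
    show "eventually (\<lambda>l. 0 \<le> fst (theta_star d0 d1 d2 (fst l) (snd l))) lam_filter"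
      using evb by eventually_elim auto
    show "eventually (\<lambda>l. fst (theta_star d0 d1 d2 (fst l) (snd l)) \<le> (d0+2*d1)*(1 - fst l * snd l)) lam_filter"
      using evb by eventually_elim auto
  qed
  have T2: "((\<lambda>l. snd (theta_star d0 d1 d2 (fst l) (snd l))) \<longlongrightarrow> 0) lam_filter"
  proof (rule tendsto_sandwich[OF _ _ tendsto_const limeta[of "d0+2*d2"]])
    show "eventually (\<lambda>l. 0 \<le> snd (theta_star d0 d1 d2 (fst l) (snd l))) lam_filter"
      using evb by eventually_elim auto
    show "eventually (\<lambda>l. snd (theta_star d0 d1 d2 (fst l) (snd l)) \<le> (d0+2*d2)*(1 - fst l * snd l)) lam_filter"
      using evb by eventually_elim auto
  qed
  have low: "((\<lambda>l. 1 - 2 * snd (theta_star d0 d1 d2 (fst l) (snd l)) / d0) \<longlongrightarrow> 1 - 2 * 0 / d0) lam_filter"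
    by (intro tendsto_intros T2) (use d in simp)
  have T3: "((\<lambda>l. p1_star d0 d1 d2 (fst l) (snd l) + p2_star d0 d1 d2 (fst l) (snd l)) \<longlongrightarrow> 1) lam_filter"
  proof (rule tendsto_sandwich[OF _ _ _ tendsto_const])
    show "((\<lambda>l. 1 - 2 * snd (theta_star d0 d1 d2 (fst l) (snd l)) / d0) \<longlongrightarrow> 1) lam_filter"
      using low by simp
    show "eventually (\<lambda>l. 1 - 2 * snd (theta_star d0 d1 d2 (fst l) (snd l)) / d0
        \<le> p1_star d0 d1 d2 (fst l) (snd l) + p2_star d0 d1 d2 (fst l) (snd l)) lam_filter"
      using ev by eventually_elim (use psum_bounds[OF d] in blast)
    show "eventually (\<lambda>l. p1_star d0 d1 d2 (fst l) (snd l) + p2_star d0 d1 d2 (fst l) (snd l) \<le> 1) lam_filter"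
      using ev by eventually_elim (use psum_bounds[OF d] in blast)
  qed
  show ?thesis using T1 T2 T3 by blast
qed

end
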